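(* Let $M$ be a smooth manifold of dimension $n\geq2$, $\Gamma$ a symmetric extended affine connection, $V$ a regular extended vector field and $Q$ an extended covector field on $M$. Let $T^k_{ij}(x,p)=T^k_{ji}(x,p)$ be the components of a smooth symmetric extended tensor field of type $(1,2)$, and set $\Gamma'^k_{ij}=\Gamma^k_{ij}+T^k_{ij}$, $Q'_i=Q_i-\sum_{k,s}T^k_{is}p_kV^s$. Then $(V,Q)$ satisfies the additional normality equations $$\sum_{r,s}(A^{rs}-A^{sr})P^i_rP^j_s=0,\quad \sum_{r,s}(C_{rs}-C_{sr})P^r_iP^s_j=0,\quad \sum_{r,s}P^i_rB^r_sP^s_j=\frac{1}{n-1}\Big(\sum_{r,s}B^r_sP^s_r\Big)P^i_j$$ computed with respect to $\Gamma$ at all points of $T^*M$ with $p\neq0$ if and only if $(V,Q')$ satisfies these equations computed with respect to $\Gamma'$ at all such points.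
   Context: Local coordinates $x^i$ on $M$ induce $(x,p)$ on $T^*M$; with $S^i_j=\partial x^i/\partial\tilde x^j$, $T^i_j=\partial\tilde x^i/\partial x^j$, $\tilde p_j=\sum_iS^i_jp_i$, a symmetric extended affine connection is given by smooth $\Gamma^k_{ij}(x,p)=\Gamma^k_{ji}(x,p)$ with $\Gamma^k_{ij}=\sum S^k_mT^a_iT^c_j\tilde\Gamma^m_{ac}+\sum_mS^k_m\partial T^m_i/\partial x^j$; extended tensor fields have components that are smooth functions of $(x,p)$ transforming tensorially. All sums run from $1$ to $n$. For a given connection: $\tilde\nabla^mX=\partial X/\partial p_m$ componentwise; $\nabla_mX^{i_1\dots i_r}_{j_1\dots j_s}=\frac{\partial X^{\dots}_{\dots}}{\partial x^m}+\sum_{b,c}p_c\Gamma^c_{mb}\frac{\partial X^{\dots}_{\dots}}{\partial p_b}+\sum_{k=1}^r\sum_a\Gamma^{i_k}_{ma}X^{i_1\dots a\dots i_r}_{j_1\dots j_s}-\sum_{k=1}^s\sum_b\Gamma^b_{mj_k}X^{i_1\dots i_r}_{j_1\dots b\dots j_s}$; $R^k_{rij}=\frac{\partial\Gamma^k_{jr}}{\partial x^i}-\frac{\partial\Gamma^k_{ir}}{\partial x^j}+\sum_m\Gamma^k_{im}\Gamma^m_{jr}-\sum_m\Gamma^k_{jm}\Gamma^m_{ir}+\sum_{m,\alpha}p_\alpha\Gamma^\alpha_{mi}\frac{\partial\Gamma^k_{jr}}{\partial p_m}-\sum_{m,\alpha}p_\alpha\Gamma^\alpha_{mj}\frac{\partial\Gamma^k_{ir}}{\partial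 p_m}$; $D^{kr}_{ij}=-\partial\Gamma^k_{ij}/\partial p_r$. Regularity of $V$: $(x,p)\mapsto(x,V(x,p))$ is a diffeomorphism $T^*M\to TM$; $V=0$ iff $p=0$; with $W^s=\sum_r(\partial V^r/\partial p_s)p_r$, $\Omega=\sum_sp_sW^s\neq0$ for $p\neq0$. Data (for a given connection and covector field $Q$): $P^i_j=\delta^i_j-W^ip_j/\Omega$; $U_s=\sum_r\nabla_sV^rp_r+Q_s$; $A^{rs}=\tilde\nabla^rW^s$; $B^r_s=\tilde\nabla^rU_s+\sum_{m,k}W^kp_mD^{mr}_{ks}-\nabla_sW^r+\sum_m\frac{\tilde\nabla^mW^r-\tilde\nabla^rW^m}{\Omega}U_sp_m$; $C_{rs}=\nabla_rU_s-\sum_m\frac{U_r\tilde\nabla^mU_s+U_s\nabla_rW^m}{\Omega}p_m-\sum_{k,q}\Big(\sum_m\frac{D^{mq}_{ks}U_r}{\Omega}p_m+\frac{R^q_{krs}}{2}\Big)W^kp_q$. *)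

theory Defs
  imports "HOL-Analysis.Analysis"
begin

text \<open>Single coordinate chart: M is (identified with) an open set U of R^n, the index
type 'n has n elements, and T*M over U is U x R^n with coordinates (x,p).
Extended objects are given by their component functions of (x,p).\<close>

fun iter_dd :: "'a::real_normed_vector list \<Rightarrow> ('a \<Rightarrow> 'b::real_normed_vector) \<Rightarrow> 'a \<Rightarrow> 'b" where
  "iter_dd [] f = f"
| "iter_dd (v # vs) f = (\<lambda>z. frechet_derivative (iter_dd vs f) (at z) v)"

definition smooth_on :: "'a::real_normed_vector set \<Rightarrow> ('a \<Rightarrow> 'b::real_normed_vector) \<Rightarrow> bool" where
  "smooth_on S f \<longleftrightarrow> (\<forall>vs. \<forall>z\<in>S. iter_dd vs f differentiable (at z))"

type_synonym 'n scal = "real^'n \<Rightarrow> real^'n \<Rightarrow> real"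

definition smooth_ext :: "(real^'n) set \<Rightarrow> 'n scal \<Rightarrow> bool" where
  "smooth_ext U f \<longleftrightarrow> smooth_on (U \<times> UNIV) (\<lambda>z. f (fst z) (snd z))"

definition dx :: "'n::finite \<Rightarrow> 'n scal \<Rightarrow> 'n scal" where
  "dx m f x p = frechet_derivative (\<lambda>z. f (fst z) (snd z)) (at (x, p)) (axis m 1, 0)"

definition dp :: "'n::finite \<Rightarrow> 'n scal \<Rightarrow> 'n scal" where
  "dp m f x p = frechet_derivative (\<lambda>z. f (fst z) (snd z)) (at (x, p)) (0, axis m 1)"

text \<open>Connection components: G k i j = Gamma^k_{ij}.\<close>
type_synonym 'n conn = "'n \<Rightarrow> 'n \<Rightarrow> 'n \<Rightarrow> 'n scal"

text \<open>Common horizontal part of nabla_m applied to a component function f.\<close>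
definition hor :: "'n::finite conn \<Rightarrow> 'n scal \<Rightarrow> 'n \<Rightarrow> 'n scal" where
  "hor G f m x p = dx m f x p + (\<Sum>b\<in>UNIV. \<Sum>c\<in>UNIV. p$c * G c m b x p * dp b f x p)"

definition nab_up :: "'n::finite conn \<Rightarrow> ('n \<Rightarrow> 'n scal) \<Rightarrow> 'n \<Rightarrow> 'n \<Rightarrow> 'n scal" where
  "nab_up G X i m x p = hor G (X i) m x p + (\<Sum>a\<in>UNIV. G i m a x p * X a x p)"

definition nab_down :: "'n::finite conn \<Rightarrow> ('n \<Rightarrow> 'n scal) \<Rightarrow> 'n \<Rightarrow> 'n \<Rightarrow> 'n scal" where
  "nab_down G Y j m x p = hor G (Y j) m x p - (\<Sum>b\<in>UNIV. G b m j x p * Y b x p)"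

definition curv :: "'n::finite conn \<Rightarrow> 'n \<Rightarrow> 'n \<Rightarrow> 'n \<Rightarrow> 'n \<Rightarrow> 'n scal" where
  "curv G k r i j x p =
     dx i (G k j r) x p - dx j (G k i r) x p
     + (\<Sum>m\<in>UNIV. G k i m x p * G m j r x p) - (\<Sum>m\<in>UNIV. G k j m x p * G m i r x p)
     + (\<Sum>m\<in>UNIV. \<Sum>\<alpha>\<in>UNIV. p$\<alpha> * G \<alpha> m i x p * dp m (G k j r) x p)
     - (\<Sum>m\<in>UNIV. \<Sum>\<alpha>\<in>UNIV. p$\<alpha> * G \<alpha> m j x p * dp m (G k i r) x p)"

definition Dt :: "'n::finite conn \<Rightarrow> 'n \<Rightarrow> 'n \<Rightarrow> 'n \<Rightarrow> 'n \<Rightarrow> 'n scal" where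
  "Dt G k r i j x p = - dp r (G k i j) x p"

definition Wf :: "('n::finite \<Rightarrow> 'n scal) \<Rightarrow> 'n \<Rightarrow> 'n scal" where
  "Wf V s x p = (\<Sum>r\<in>UNIV. dp s (V r) x p * p$r)"

definition Omega :: "('n::finite \<Rightarrow> 'n scal) \<Rightarrow> 'n scal" where
  "Omega V x p = (\<Sum>s\<in>UNIV. p$s * Wf V s x p)"

definition Pf :: "('n::finite \<Rightarrow> 'n scal) \<Rightarrow> 'n \<Rightarrow> 'n \<Rightarrow> 'n scal" where
  "Pf V i j x p = (if i = j then 1 else 0) - Wf V i x p * p$j / Omega V x p"

definition Uf :: "'n::finite conn \<Rightarrow> ('n \<Rightarrow> 'n scal) \<Rightarrow> ('n \<Rightarrow> 'n scal) \<Rightarrow> 'n \<Rightarrow> 'n scal" where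
  "Uf G V Q s x p = (\<Sum>r\<in>UNIV. nab_up G V r s x p * p$r) + Q s x p"

definition Af :: "('n::finite \<Rightarrow> 'n scal) \<Rightarrow> 'n \<Rightarrow> 'n \<Rightarrow> 'n scal" where
  "Af V r s x p = dp r (Wf V s) x p"

definition Bf :: "'n::finite conn \<Rightarrow> ('n \<Rightarrow> 'n scal) \<Rightarrow> ('n \<Rightarrow> 'n scal) \<Rightarrow> 'n \<Rightarrow> 'n \<Rightarrow> 'n scal" where
  "Bf G V Q r s x p =
     dp r (Uf G V Q s) x p
     + (\<Sum>m\<in>UNIV. \<Sum>k\<in>UNIV. Wf V k x p * p$m * Dt G m r k s x p)
     - nab_up G (Wf V) r s x p
     + (\<Sum>m\<in>UNIV. (dp m (Wf V r) x p - dp r (Wf V m) x p) / Omega V x p * Uf G V Q s x p * p$m)"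

definition Cf :: "'n::finite conn \<Rightarrow> ('n \<Rightarrow> 'n scal) \<Rightarrow> ('n \<Rightarrow> 'n scal) \<Rightarrow> 'n \<Rightarrow> 'n \<Rightarrow> 'n scal" where
  "Cf G V Q r s x p =
     nab_down G (Uf G V Q) s r x p
     - (\<Sum>m\<in>UNIV. (Uf G V Q r x p * dp m (Uf G V Q s) x p
                    + Uf G V Q s x p * nab_up G (Wf V) m r x p) / Omega V x p * p$m)
     - (\<Sum>k\<in>UNIV. \<Sum>q\<in>UNIV.
          ((\<Sum>m\<in>UNIV. Dt G m q k s x p * Uf G V Q r x p / Omega V x p * p$m)
           + curv G q k r s x p / 2) * Wf V k x p * p$q)"

definition normality_eqs :: "'n::finite conn \<Rightarrow> ('n \<Rightarrow> 'n scal) \<Rightarrow> ('n \<Rightarrow> 'n scal) \<Rightarrow> real^'n \<Rightarrow> real^'n \<Rightarrow> bool" where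
  "normality_eqs G V Q x p \<longleftrightarrow>
     (\<forall>i j. (\<Sum>r\<in>UNIV. \<Sum>s\<in>UNIV. (Af V r s x p - Af V s r x p) * Pf V i r x p * Pf V j s x p) = 0)
   \<and> (\<forall>i j. (\<Sum>r\<in>UNIV. \<Sum>s\<in>UNIV. (Cf G V Q r s x p - Cf G V Q s r x p) * Pf V r i x p * Pf V s j x p) = 0)
   \<and> (\<forall>i j. (\<Sum>r\<in>UNIV. \<Sum>s\<in>UNIV. Pf V i r x p * Bf G V Q r s x p * Pf V s j x p)
           = 1 / (real CARD('n) - 1) * (\<Sum>r\<in>UNIV. \<Sum>s\<in>UNIV. Bf G V Q r s x p * Pf V s r x p) * Pf V i j x p)"

definition regular_field :: "(real^'n::finite) set \<Rightarrow> ('n \<Rightarrow> 'n scal) \<Rightarrow> bool" where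
  "regular_field U V \<longleftrightarrow>
     (let \<Phi> = (\<lambda>z::(real^'n) \<times> (real^'n). (fst z, \<chi> i. V i (fst z) (snd z))) in
        bij_betw \<Phi> (U \<times> UNIV) (U \<times> UNIV)
      \<and> smooth_on (U \<times> UNIV) \<Phi>
      \<and> smooth_on (U \<times> UNIV) (inv_into (U \<times> UNIV) \<Phi>))
   \<and> (\<forall>x\<in>U. \<forall>p. (\<forall>i. V i x p = 0) \<longleftrightarrow> p = 0)
   \<and> (\<forall>x\<in>U. \<forall>p. p \<noteq> 0 \<longrightarrow> Omega V x p \<noteq> 0)"

end

theory Submission
  imports Defs
begin


lemma ifm1: "(if a then 1 else 0) * x = (if a then x else (0::real))" by simp
lemma ifm2: "x * (if a then 1 else 0) = (if a then x else (0::real))" by simp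
lemma ifm3: "x * (if a then y else 0) = (if a then x * y else (0::real))" by simp
lemma ifm4: "(if a then y else 0) * x = (if a then y * x else (0::real))" by simp
lemmas NS = algebra_simps sum.distrib sum_subtractf sum_distrib_left sum_distrib_right sum_divide_distrib diff_divide_distrib add_divide_distrib sum_negf ifm1 ifm2 ifm3 ifm4 sum.delta sum.delta'


definition "hnab p g A Wx W b s = Wx b s + (\<Sum>m\<in>UNIV. \<Sum>c\<in>UNIV. p c * g c s m * A m b) + (\<Sum>a\<in>UNIV. g b s a * W a)"
  for p :: "'n::finite \<Rightarrow> real"
definition "Bg p W A Wx Om g gp U Up r s = Up s r + (\<Sum>m\<in>UNIV. \<Sum>k\<in>UNIV. W k * p m * - gp m k s r) - hnab p g A Wx W r s
   + (\<Sum>m\<in>UNIV. (A m r - A r m) / Om * U s * p m)"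
  for p :: "'n::finite \<Rightarrow> real"
definition "curvg p g gx gp q k r s = gx q s k r - gx q r k s + (\<Sum>m\<in>UNIV. g q r m * g m s k) - (\<Sum>m\<in>UNIV. g q s m * g m r k)
   + (\<Sum>m\<in>UNIV. \<Sum>a\<in>UNIV. p a * g a m r * gp q s k m) - (\<Sum>m\<in>UNIV. \<Sum>a\<in>UNIV. p a * g a m s * gp q r k m)"
  for p :: "'n::finite \<Rightarrow> real"
definition "nabUg p g U Ux Up r s = Ux s r + (\<Sum>b\<in>UNIV. \<Sum>c\<in>UNIV. p c * g c r b * Up s b) - (\<Sum>b\<in>UNIV. g b r s * U b)"
  for p :: "'n::finite \<Rightarrow> real"
definition "Cg p W A Wx Om g gx gp U Ux Up r s = nabUg p g U Ux Up r s
   - (\<Sum>m\<in>UNIV. (U r * Up s m + U s * hnab p g A Wx W m r) / Om * p m)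
   - (\<Sum>k\<in>UNIV. \<Sum>q\<in>UNIV. ((\<Sum>m\<in>UNIV. - gp m k s q * U r / Om * p m) + curvg p g gx gp q k r s / 2) * W k * p q)"
  for p :: "'n::finite \<Rightarrow> real"

definition "PBg p W A Wx Om g gp U Up s = (\<Sum>m\<in>UNIV. p m * Bg p W A Wx Om g gp U Up m s)"
  for p :: "'n::finite \<Rightarrow> real"
definition "Rcg p W g gx gp r s = (\<Sum>k\<in>UNIV. \<Sum>q\<in>UNIV. curvg p g gx gp q k r s * W k * p q)"
  for p :: "'n::finite \<Rightarrow> real"

lemma curv_anti: "curvg p g gx gp q k s r = - curvg p g gx gp q k r s"
  unfolding curvg_def by simp

lemma Rc_anti: "Rcg p W g gx gp s r = - Rcg p W g gx gp r s"
  unfolding Rcg_def by (simp add: curv_anti[of _ _ _ _ _ _ s r] sum_negf)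

lemma antisym0: "(\<Sum>m\<in>UNIV. \<Sum>m'\<in>UNIV. p m * p m' * (A m' m - A m m')) = (0::real)"
  for p :: "'n::finite \<Rightarrow> real"
proof -
  have "(\<Sum>m\<in>UNIV. \<Sum>m'\<in>UNIV. p m * p m' * A m' m) = (\<Sum>m\<in>UNIV. \<Sum>m'\<in>UNIV. p m * p m' * A m m')"
    by (subst sum.swap) (simp add: mult.commute)
  then show ?thesis by (simp add: right_diff_distrib sum_subtractf)
qed


lemma sum3_rot: "(\<Sum>a\<in>UNIV. \<Sum>b\<in>UNIV. \<Sum>c\<in>UNIV. f a b c) = (\<Sum>b\<in>UNIV. \<Sum>c\<in>UNIV. \<Sum>a\<in>UNIV. f a b c :: real)"
  for f :: "'a::finite \<Rightarrow> 'b::finite \<Rightarrow> 'c::finite \<Rightarrow> real"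
proof -
  have "(\<Sum>a\<in>UNIV. \<Sum>b\<in>UNIV. \<Sum>c\<in>UNIV. f a b c) = (\<Sum>b\<in>UNIV. \<Sum>a\<in>UNIV. \<Sum>c\<in>UNIV. f a b c)"
    by (rule sum.swap)
  also have "\<dots> = (\<Sum>b\<in>UNIV. \<Sum>c\<in>UNIV. \<Sum>a\<in>UNIV. f a b c)"
    by (rule sum.cong[OF refl], rule sum.swap)
  finally show ?thesis .
qed

lemma PB_eq0: "PBg p W A Wx Om g gp U Up s = (\<Sum>m\<in>UNIV. p m * Up s m)
   - (\<Sum>m\<in>UNIV. \<Sum>k\<in>UNIV. \<Sum>q\<in>UNIV. gp m k s q * W k * p m * p q)
   - (\<Sum>m\<in>UNIV. p m * hnab p g A Wx W m s)"
proof -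
  have z: "(\<Sum>m\<in>UNIV. p m * (\<Sum>m'\<in>UNIV. (A m' m - A m m') / Om * U s * p m')) = 0"
  proof -
    have "(\<Sum>m\<in>UNIV. p m * (\<Sum>m'\<in>UNIV. (A m' m - A m m') / Om * U s * p m'))
       = (U s / Om) * (\<Sum>m\<in>UNIV. \<Sum>m'\<in>UNIV. p m * p m' * (A m' m - A m m'))"
      by (simp add: NS)
    then show ?thesis by (simp add: antisym0)
  qed
  have "PBg p W A Wx Om g gp U Up s = (\<Sum>m\<in>UNIV. p m * Up s m)
     + (\<Sum>m\<in>UNIV. p m * (\<Sum>m'\<in>UNIV. \<Sum>k\<in>UNIV. W k * p m' * - gp m' k s m))
     - (\<Sum>m\<in>UNIV. p m * hnab p g A Wx W m s)
     + (\<Sum>m\<in>UNIV. p m * (\<Sum>m'\<in>UNIV. (A m' m - A m m') / Om * U s * p m'))"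
    unfolding PBg_def Bg_def by (simp add: algebra_simps sum.distrib sum_subtractf)
  also have "(\<Sum>m\<in>UNIV. p m * (\<Sum>m'\<in>UNIV. \<Sum>k\<in>UNIV. W k * p m' * - gp m' k s m))
     = - (\<Sum>m\<in>UNIV. \<Sum>k\<in>UNIV. \<Sum>q\<in>UNIV. gp m k s q * W k * p m * p q)"
  proof -
    have "(\<Sum>m\<in>UNIV. p m * (\<Sum>m'\<in>UNIV. \<Sum>k\<in>UNIV. W k * p m' * - gp m' k s m))
       = - (\<Sum>q\<in>UNIV. \<Sum>m\<in>UNIV. \<Sum>k\<in>UNIV. gp m k s q * W k * p m * p q)"
      by (simp add: NS)
    also have "(\<Sum>q\<in>UNIV. \<Sum>m\<in>UNIV. \<Sum>k\<in>UNIV. gp m k s q * W k * p m * p q) = (\<Sum>m\<in>UNIV. \<Sum>q\<in>UNIV. \<Sum>k\<in>UNIV. gp m k s q * W k * p m * p q)"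
      by (rule sum.swap)
    also have "\<dots> = (\<Sum>m\<in>UNIV. \<Sum>k\<in>UNIV. \<Sum>q\<in>UNIV. gp m k s q * W k * p m * p q)"
      by (rule sum.cong[OF refl], rule sum.swap)
    finally show ?thesis .
  qed
  finally show ?thesis using z by simp
qed

lemma PB_eq: "PBg p W A Wx Om g gp U Up s = (\<Sum>m\<in>UNIV. p m * Up s m)
   - (\<Sum>k\<in>UNIV. \<Sum>q\<in>UNIV. \<Sum>m\<in>UNIV. gp m k s q * W k * p m * p q)
   - (\<Sum>m\<in>UNIV. p m * hnab p g A Wx W m s)"
  unfolding PB_eq0 sum3_rot[of "\<lambda>m k q. gp m k s q * W k * p m * p q"] ..

lemma C_expr: "Cg p W A Wx Om g gx gp U Ux Up r s = nabUg p g U Ux Up r s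
   - (U r * (PBg p W A Wx Om g gp U Up s + (\<Sum>m\<in>UNIV. p m * hnab p g A Wx W m s))
      + U s * (\<Sum>m\<in>UNIV. p m * hnab p g A Wx W m r)) / Om - Rcg p W g gx gp r s / 2"
proof -
  have a: "(\<Sum>m\<in>UNIV. (U r * Up s m + U s * hnab p g A Wx W m r) / Om * p m)
     = (U r * (\<Sum>m\<in>UNIV. p m * Up s m) + U s * (\<Sum>m\<in>UNIV. p m * hnab p g A Wx W m r)) / Om"
    by (simp add: NS)
  have b: "(\<Sum>k\<in>UNIV. \<Sum>q\<in>UNIV. ((\<Sum>m\<in>UNIV. - gp m k s q * U r / Om * p m) + curvg p g gx gp q k r s / 2) * W k * p q)
     = - (U r / Om) * (\<Sum>k\<in>UNIV. \<Sum>q\<in>UNIV. \<Sum>m\<in>UNIV. gp m k s q * W k * p m * p q) + Rcg p W g gx gp r s / 2"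
    unfolding Rcg_def by (simp add: NS)
  show ?thesis apply (unfold Cg_def) apply (unfold a b PB_eq) apply (unfold divide_inverse) by algebra
qed

lemma AC_gen: "Cg p W A Wx Om g gx gp U Ux Up r s - Cg p W A Wx Om g gx gp U Ux Up s r
  = nabUg p g U Ux Up r s - nabUg p g U Ux Up s r
    - (U r * PBg p W A Wx Om g gp U Up s - U s * PBg p W A Wx Om g gp U Up r) / Om - Rcg p W g gx gp r s"
  apply (unfold C_expr Rc_anti[of p W g gx gp s r]) apply (unfold divide_inverse) by algebra

locale alg =
  fixes p W U :: "'n::finite \<Rightarrow> real" and A Wx Ux Up :: "'n \<Rightarrow> 'n \<Rightarrow> real"
    and g T :: "'n \<Rightarrow> 'n \<Rightarrow> 'n \<Rightarrow> real" and gx gp Tx Tp :: "'n \<Rightarrow> 'n \<Rightarrow> 'n \<Rightarrow> 'n \<Rightarrow> real"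
    and Om :: real
  assumes gs: "g c a b = g c b a" and Ts: "T c a b = T c b a"
    and gps: "gp c a b r = gp c b a r" and Tps: "Tp c a b r = Tp c b a r"
begin

definition "t m b = (\<Sum>c\<in>UNIV. p c * T c m b)"
definition "tau s = (\<Sum>b\<in>UNIV. t s b * W b)"
definition "g2 c a b = g c a b + T c a b"
definition "gx2 c a b r = gx c a b r + Tx c a b r"
definition "gp2 c a b r = gp c a b r + Tp c a b r"
definition "U2 s = U s + tau s"
definition "Ux2 s r = Ux s r + (\<Sum>b\<in>UNIV. \<Sum>c\<in>UNIV. p c * Tx c s b r * W b + p c * T c s b * Wx b r)"
definition "Up2 s r = Up s r + (\<Sum>b\<in>UNIV. \<Sum>c\<in>UNIV. ((if c = r then 1 else 0) * T c s b + p c * Tp c s b r) * W b + p c * T c s b * A r b)"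
definition "E a b = A a b - A b a"
definition "P i j = (if i = j then 1 else 0) - W i * p j / Om"
definition "B r s = Bg p W A Wx Om g gp U Up r s"
definition "B2 r s = Bg p W A Wx Om g2 gp2 U2 Up2 r s"

lemma h1: "hnab p g2 A Wx W r s = hnab p g A Wx W r s + (\<Sum>m\<in>UNIV. t s m * A m r) + (\<Sum>a\<in>UNIV. T r s a * W a)"
  unfolding hnab_def t_def g2_def by (simp add: NS)

lemma h2: "Up2 s r = Up s r + (\<Sum>b\<in>UNIV. T r s b * W b) + (\<Sum>b\<in>UNIV. \<Sum>c\<in>UNIV. p c * Tp c s b r * W b) + (\<Sum>b\<in>UNIV. t s b * A r b)"
  unfolding Up2_def t_def by (simp add: NS)

lemma h3: "(\<Sum>m\<in>UNIV. \<Sum>k\<in>UNIV. W k * p m * - gp2 m k s r) = (\<Sum>m\<in>UNIV. \<Sum>k\<in>UNIV. W k * p m * - gp m k s r) - (\<Sum>b\<in>UNIV. \<Sum>c\<in>UNIV. p c * Tp c s b r * W b)"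
proof -
  have b: "(\<Sum>b\<in>UNIV. \<Sum>c\<in>UNIV. p c * Tp c s b r * W b) = (\<Sum>m\<in>UNIV. \<Sum>k\<in>UNIV. W k * p m * Tp m k s r)"
    by (subst sum.swap) (simp add: Tps[of _ s] mult_ac)
  have a: "(\<Sum>m\<in>UNIV. \<Sum>k\<in>UNIV. W k * p m * - gp2 m k s r) = (\<Sum>m\<in>UNIV. \<Sum>k\<in>UNIV. W k * p m * - gp m k s r) - (\<Sum>m\<in>UNIV. \<Sum>k\<in>UNIV. W k * p m * Tp m k s r)"
    unfolding gp2_def by (simp add: NS)
  show ?thesis using a b by linarith
qed

lemma h5: "(\<Sum>m\<in>UNIV. \<Sum>b\<in>UNIV. E r m * P b m * t s b) = (\<Sum>b\<in>UNIV. t s b * A r b) - (\<Sum>m\<in>UNIV. t s m * A m r) + (\<Sum>m\<in>UNIV. (A m r - A r m) * p m) * tau s / Om"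
proof -
  have "\<And>m. (\<Sum>b\<in>UNIV. P b m * t s b) = t s m - tau s * p m / Om"
    unfolding P_def tau_def by (simp add: NS)
  then have "(\<Sum>m\<in>UNIV. \<Sum>b\<in>UNIV. E r m * P b m * t s b) = (\<Sum>m\<in>UNIV. E r m * (t s m - tau s * p m / Om))"
    by (simp add: sum_distrib_left[symmetric] mult.assoc)
  also have "\<dots> = (\<Sum>b\<in>UNIV. t s b * A r b) - (\<Sum>m\<in>UNIV. t s m * A m r) + (\<Sum>m\<in>UNIV. (A m r - A r m) * p m) * tau s / Om"
    unfolding E_def by (simp add: NS)
  finally show ?thesis .
qed

lemma B_diff: "B2 r s = B r s + (\<Sum>m\<in>UNIV. \<Sum>b\<in>UNIV. E r m * P b m * t s b)"
proof -
  have h4: "(\<Sum>m\<in>UNIV. (A m r - A r m) / Om * U2 s * p m) = (\<Sum>m\<in>UNIV. (A m r - A r m) / Om * U s * p m) + (\<Sum>m\<in>UNIV. (A m r - A r m) * p m) * tau s / Om"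
    unfolding U2_def by (simp add: NS)
  show ?thesis unfolding B2_def B_def Bg_def h1 h2 h3 h4 h5 by simp
qed

end




context alg begin

definition "gam r b = (\<Sum>c\<in>UNIV. p c * g c r b)"
definition "dUp s b = Up2 s b - Up s b"
definition "hn b s = hnab p g A Wx W b s"
definition "nabU r s = nabUg p g U Ux Up r s"
definition "nabU2 r s = nabUg p g2 U2 Ux2 Up2 r s"
definition "PB s = PBg p W A Wx Om g gp U Up s"
definition "PB2 s = PBg p W A Wx Om g2 gp2 U2 Up2 s"
definition "Rc r s = Rcg p W g gx gp r s"
definition "Rc2 r s = Rcg p W g2 gx2 gp2 r s"
definition "C r s = Cg p W A Wx Om g gx gp U Ux Up r s"
definition "C2 r s = Cg p W A Wx Om g2 gx2 gp2 U2 Ux2 Up2 r s"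
definition "e b = (\<Sum>m\<in>UNIV. p m * E m b)"
definition "zeta s = (\<Sum>b\<in>UNIV. t s b * e b)"
definition "tP r b = (\<Sum>c\<in>UNIV. t r c * P c b)"

lemma t_sym: "t a b = t b a" unfolding t_def by (simp add: Ts)
lemma gam_sym: "gam a b = gam b a" unfolding gam_def by (simp add: gs)

lemma ep0: "(\<Sum>m\<in>UNIV. e m * p m) = 0"
proof -
  have "(\<Sum>m\<in>UNIV. e m * p m) = (\<Sum>m\<in>UNIV. \<Sum>m'\<in>UNIV. p m * p m' * (A m' m - A m m'))"
    unfolding e_def E_def by (simp add: NS)
  then show ?thesis by (simp add: antisym0)
qed

lemma eP: "(\<Sum>m\<in>UNIV. e m * P b m) = e b"
proof -
  have "(\<Sum>m\<in>UNIV. e m * P b m) = e b - W b * (\<Sum>m\<in>UNIV. e m * p m) / Om"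
    unfolding P_def by (simp add: NS)
  then show ?thesis by (simp add: ep0)
qed

lemma PB2_eq: "PB2 s = PB s + zeta s"
proof -
  have "PB2 s = PB s + (\<Sum>m\<in>UNIV. p m * (\<Sum>m'\<in>UNIV. \<Sum>b\<in>UNIV. E m m' * P b m' * t s b))"
    unfolding PB2_def PB_def PBg_def B2_def[symmetric] B_def[symmetric] B_diff by (simp add: NS)
  also have "(\<Sum>m\<in>UNIV. p m * (\<Sum>m'\<in>UNIV. \<Sum>b\<in>UNIV. E m m' * P b m' * t s b))
     = (\<Sum>m\<in>UNIV. \<Sum>m'\<in>UNIV. \<Sum>b\<in>UNIV. p m * E m m' * P b m' * t s b)"
    by (simp add: NS)
  also have "\<dots> = (\<Sum>m'\<in>UNIV. \<Sum>b\<in>UNIV. \<Sum>m\<in>UNIV. p m * E m m' * P b m' * t s b)"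
    by (rule sum3_rot)
  also have "\<dots> = (\<Sum>m'\<in>UNIV. \<Sum>b\<in>UNIV. e m' * P b m' * t s b)"
    unfolding e_def by (simp add: NS)
  also have "\<dots> = (\<Sum>b\<in>UNIV. \<Sum>m'\<in>UNIV. e m' * P b m' * t s b)"
    by (rule sum.swap)
  also have "\<dots> = (\<Sum>b\<in>UNIV. t s b * (\<Sum>m'\<in>UNIV. e m' * P b m'))"
    by (simp add: sum_distrib_left mult_ac)
  also have "\<dots> = zeta s" unfolding eP zeta_def ..
  finally show ?thesis .
qed


lemma sum3_rev: "(\<Sum>a\<in>UNIV. \<Sum>b\<in>UNIV. \<Sum>c\<in>UNIV. f a b c) = (\<Sum>c\<in>UNIV. \<Sum>b\<in>UNIV. \<Sum>a\<in>UNIV. f a b c :: real)"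
  for f :: "'a::finite \<Rightarrow> 'b::finite \<Rightarrow> 'c::finite \<Rightarrow> real"
proof -
  have "(\<Sum>a\<in>UNIV. \<Sum>b\<in>UNIV. \<Sum>c\<in>UNIV. f a b c) = (\<Sum>b\<in>UNIV. \<Sum>c\<in>UNIV. \<Sum>a\<in>UNIV. f a b c)"
    by (rule sum3_rot)
  also have "\<dots> = (\<Sum>c\<in>UNIV. \<Sum>b\<in>UNIV. \<Sum>a\<in>UNIV. f a b c)"
    by (rule sum.swap)
  finally show ?thesis .
qed

definition "n1 r s = (\<Sum>b\<in>UNIV. \<Sum>c\<in>UNIV. p c * Tx c s b r * W b)"
definition "n2 r s = (\<Sum>b\<in>UNIV. t s b * Wx b r)"
definition "n3a r s = (\<Sum>b\<in>UNIV. \<Sum>k\<in>UNIV. gam r b * T b s k * W k)"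
definition "n3b r s = (\<Sum>b\<in>UNIV. \<Sum>k\<in>UNIV. \<Sum>c\<in>UNIV. gam r b * p c * Tp c s k b * W k)"
definition "n3c r s = (\<Sum>b\<in>UNIV. \<Sum>k\<in>UNIV. gam r b * t s k * A b k)"
definition "n4 r s = (\<Sum>b\<in>UNIV. t r b * Up s b)"
definition "n5a r s = (\<Sum>b\<in>UNIV. \<Sum>k\<in>UNIV. t r b * T b s k * W k)"
definition "n5b r s = (\<Sum>b\<in>UNIV. \<Sum>k\<in>UNIV. \<Sum>c\<in>UNIV. t r b * p c * Tp c s k b * W k)"
definition "n5c r s = (\<Sum>b\<in>UNIV. \<Sum>k\<in>UNIV. t r b * t s k * A b k)"
definition "sy r s = (\<Sum>b\<in>UNIV. g2 b r s * U2 b) - (\<Sum>b\<in>UNIV. g b r s * U b)"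
definition "rho1 r s = (\<Sum>k\<in>UNIV. \<Sum>q\<in>UNIV. Tx q s k r * W k * p q)"
definition "rho2 r s = (\<Sum>k\<in>UNIV. \<Sum>q\<in>UNIV. \<Sum>m\<in>UNIV. g q r m * T m s k * W k * p q)"
definition "rho3 r s = (\<Sum>k\<in>UNIV. \<Sum>q\<in>UNIV. \<Sum>m\<in>UNIV. T q r m * g m s k * W k * p q)"
definition "rho4 r s = (\<Sum>k\<in>UNIV. \<Sum>q\<in>UNIV. \<Sum>m\<in>UNIV. T q r m * T m s k * W k * p q)"
definition "rho5 r s = (\<Sum>k\<in>UNIV. \<Sum>q\<in>UNIV. \<Sum>m\<in>UNIV. \<Sum>a\<in>UNIV. p a * g a m r * Tp q s k m * W k * p q)"
definition "rho6 r s = (\<Sum>k\<in>UNIV. \<Sum>q\<in>UNIV. \<Sum>m\<in>UNIV. \<Sum>a\<in>UNIV. p a * T a m r * gp q s k m * W k * p q)"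
definition "rho7 r s = (\<Sum>k\<in>UNIV. \<Sum>q\<in>UNIV. \<Sum>m\<in>UNIV. \<Sum>a\<in>UNIV. p a * T a m r * Tp q s k m * W k * p q)"
definition "rho r s = rho1 r s + rho2 r s + rho3 r s + rho4 r s + rho5 r s + rho6 r s + rho7 r s"
definition "beta r s = (\<Sum>b\<in>UNIV. \<Sum>m\<in>UNIV. \<Sum>k\<in>UNIV. t r b * W k * p m * gp m k s b)"
definition "eta2 r s = (\<Sum>b\<in>UNIV. \<Sum>m\<in>UNIV. t r b * gam s m * A m b)"
definition "eta3 r s = (\<Sum>b\<in>UNIV. \<Sum>a\<in>UNIV. t r b * g b s a * W a)"

lemma Ux2_eq: "Ux2 s r = Ux s r + n1 r s + n2 r s"
  unfolding Ux2_def n1_def n2_def t_def by (simp add: NS)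

lemma fold0: "(\<Sum>b\<in>UNIV. \<Sum>c\<in>UNIV. p c * g c r b * Up s b) = (\<Sum>b\<in>UNIV. gam r b * Up s b)"
  unfolding gam_def by (simp add: NS)

lemma fold1: "(\<Sum>b\<in>UNIV. \<Sum>c\<in>UNIV. p c * g2 c r b * Up2 s b) = (\<Sum>b\<in>UNIV. (gam r b + t r b) * (Up s b + dUp s b))"
  unfolding gam_def t_def g2_def dUp_def by (simp add: NS)

lemma dUp_eq: "dUp s b = (\<Sum>k\<in>UNIV. T b s k * W k) + (\<Sum>k\<in>UNIV. \<Sum>c\<in>UNIV. p c * Tp c s k b * W k) + (\<Sum>k\<in>UNIV. t s k * A b k)"
  unfolding dUp_def h2 by simp

lemma N_eq: "nabU2 r s = nabU r s + n1 r s + n2 r s + n3a r s + n3b r s + n3c r s + n4 r s + n5a r s + n5b r s + n5c r s - sy r s"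
proof -
  have "nabU2 r s = Ux s r + n1 r s + n2 r s + (\<Sum>b\<in>UNIV. (gam r b + t r b) * (Up s b + dUp s b)) - (\<Sum>b\<in>UNIV. g2 b r s * U2 b)"
    unfolding nabU2_def nabUg_def fold1 Ux2_eq ..
  moreover have "nabU r s = Ux s r + (\<Sum>b\<in>UNIV. gam r b * Up s b) - (\<Sum>b\<in>UNIV. g b r s * U b)"
    unfolding nabU_def nabUg_def fold0 ..
  moreover have "(\<Sum>b\<in>UNIV. (gam r b + t r b) * (Up s b + dUp s b)) = (\<Sum>b\<in>UNIV. gam r b * Up s b) + n3a r s + n3b r s + n3c r s + n4 r s + n5a r s + n5b r s + n5c r s"
    unfolding dUp_eq n3a_def n3b_def n3c_def n4_def n5a_def n5b_def n5c_def by (simp add: NS)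
  ultimately show ?thesis unfolding sy_def by simp
qed

lemma sy_sym: "sy r s = sy s r"
  unfolding sy_def g2_def by (simp add: gs Ts)

lemma R_eq: "Rc2 r s = Rc r s + rho r s - rho s r"
  unfolding Rc2_def Rc_def Rcg_def curvg_def g2_def gx2_def gp2_def rho_def rho1_def rho2_def rho3_def rho4_def rho5_def rho6_def rho7_def
  by (simp add: NS)


lemma M1: "rho1 r s = n1 r s"
  unfolding rho1_def n1_def by (simp add: mult_ac)

lemma M2: "rho2 r s = n3a r s"
proof -
  have "rho2 r s = (\<Sum>k\<in>UNIV. \<Sum>m\<in>UNIV. \<Sum>q\<in>UNIV. g q r m * T m s k * W k * p q)"
    unfolding rho2_def by (rule sum.cong[OF refl], rule sum.swap)
  also have "\<dots> = (\<Sum>k\<in>UNIV. \<Sum>m\<in>UNIV. gam r m * T m s k * W k)"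
    unfolding gam_def by (simp add: NS)
  also have "\<dots> = n3a r s"
    unfolding n3a_def by (rule sum.swap)
  finally show ?thesis .
qed

lemma M3: "rho3 r s = eta3 r s"
proof -
  have "rho3 r s = (\<Sum>k\<in>UNIV. \<Sum>m\<in>UNIV. \<Sum>q\<in>UNIV. T q r m * g m s k * W k * p q)"
    unfolding rho3_def by (rule sum.cong[OF refl], rule sum.swap)
  also have "\<dots> = (\<Sum>k\<in>UNIV. \<Sum>m\<in>UNIV. t r m * g m s k * W k)"
    unfolding t_def by (simp add: NS)
  also have "\<dots> = eta3 r s"
    unfolding eta3_def by (rule sum.swap)
  finally show ?thesis .
qed

lemma M4: "rho4 r s = n5a r s"
proof -
  have "rho4 r s = (\<Sum>k\<in>UNIV. \<Sum>m\<in>UNIV. \<Sum>q\<in>UNIV. T q r m * T m s k * W k * p q)"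
    unfolding rho4_def by (rule sum.cong[OF refl], rule sum.swap)
  also have "\<dots> = (\<Sum>k\<in>UNIV. \<Sum>m\<in>UNIV. t r m * T m s k * W k)"
    unfolding t_def by (simp add: NS)
  also have "\<dots> = n5a r s"
    unfolding n5a_def by (rule sum.swap)
  finally show ?thesis .
qed

lemma M5: "rho5 r s = n3b r s"
proof -
  have "rho5 r s = (\<Sum>k\<in>UNIV. \<Sum>q\<in>UNIV. \<Sum>m\<in>UNIV. gam m r * Tp q s k m * W k * p q)"
    unfolding rho5_def gam_def by (simp add: NS)
  also have "\<dots> = n3b r s"
  proof -
    have "n3b r s = (\<Sum>k\<in>UNIV. \<Sum>c\<in>UNIV. \<Sum>b\<in>UNIV. gam r b * p c * Tp c s k b * W k)"
      unfolding n3b_def by (rule sum3_rot)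
    then show ?thesis by (simp add: gam_sym[of r] mult_ac)
  qed
  finally show ?thesis .
qed

lemma M6: "rho6 r s = beta r s"
proof -
  have "rho6 r s = (\<Sum>k\<in>UNIV. \<Sum>q\<in>UNIV. \<Sum>m\<in>UNIV. t m r * gp q s k m * W k * p q)"
    unfolding rho6_def t_def by (simp add: NS)
  also have "\<dots> = beta r s"
  proof -
    have "beta r s = (\<Sum>k\<in>UNIV. \<Sum>m\<in>UNIV. \<Sum>b\<in>UNIV. t r b * W k * p m * gp m k s b)"
      unfolding beta_def by (rule sum3_rev)
    then show ?thesis by (simp add: t_sym[of r] gps[of _ s] mult_ac)
  qed
  finally show ?thesis .
qed

lemma M7: "rho7 r s = n5b r s"
proof -
  have "rho7 r s = (\<Sum>k\<in>UNIV. \<Sum>q\<in>UNIV. \<Sum>m\<in>UNIV. t m r * Tp q s k m * W k * p q)"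
    unfolding rho7_def t_def by (simp add: NS)
  also have "\<dots> = n5b r s"
  proof -
    have "n5b r s = (\<Sum>k\<in>UNIV. \<Sum>c\<in>UNIV. \<Sum>b\<in>UNIV. t r b * p c * Tp c s k b * W k)"
      unfolding n5b_def by (rule sum3_rot)
    then show ?thesis by (simp add: t_sym[of r] mult_ac)
  qed
  finally show ?thesis .
qed

lemma M9: "eta2 s r = n3c r s"
proof -
  have "eta2 s r = (\<Sum>m\<in>UNIV. \<Sum>b\<in>UNIV. t s b * gam r m * A m b)"
    unfolding eta2_def by (rule sum.swap)
  then show ?thesis unfolding n3c_def by (simp add: mult_ac)
qed

lemma M8: "n5c r s - n5c s r = (\<Sum>b\<in>UNIV. \<Sum>k\<in>UNIV. t r b * t s k * E b k)"
proof -
  have "n5c s r = (\<Sum>k\<in>UNIV. \<Sum>b\<in>UNIV. t s b * t r k * A b k)"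
    unfolding n5c_def by (rule sum.swap)
  then show ?thesis unfolding n5c_def E_def by (simp add: NS)
qed

lemma hn_eq: "(\<Sum>b\<in>UNIV. t r b * hn b s) = n2 s r + eta2 r s + eta3 r s"
  unfolding hn_def hnab_def n2_def eta2_def eta3_def gam_def by (simp add: NS)

lemma tB: "(\<Sum>b\<in>UNIV. t r b * B b s) = n4 r s - beta r s - (\<Sum>b\<in>UNIV. t r b * hn b s) + U s * zeta r / Om"
proof -
  have "(\<Sum>b\<in>UNIV. t r b * B b s) = (\<Sum>b\<in>UNIV. t r b * (Up s b + (\<Sum>m\<in>UNIV. \<Sum>k\<in>UNIV. W k * p m * - gp m k s b) - hn b s
      + (\<Sum>m\<in>UNIV. (A m b - A b m) / Om * U s * p m)))"
    unfolding B_def Bg_def hn_def ..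
  also have "\<dots> = n4 r s - beta r s - (\<Sum>b\<in>UNIV. t r b * hn b s) + U s * zeta r / Om"
    unfolding n4_def beta_def zeta_def e_def E_def by (simp add: NS)
  finally show ?thesis .
qed

lemma PBB: "(\<Sum>b\<in>UNIV. P c b * B b s) = B c s - W c * PB s / Om"
  unfolding P_def PB_def PBg_def B_def[symmetric] by (simp add: NS)

lemma tPB: "(\<Sum>b\<in>UNIV. tP r b * B b s) = (\<Sum>b\<in>UNIV. t r b * B b s) - tau r * PB s / Om"
proof -
  have "(\<Sum>b\<in>UNIV. tP r b * B b s) = (\<Sum>b\<in>UNIV. \<Sum>c\<in>UNIV. t r c * P c b * B b s)"
    unfolding tP_def by (simp add: NS)
  also have "\<dots> = (\<Sum>c\<in>UNIV. \<Sum>b\<in>UNIV. t r c * P c b * B b s)" by (rule sum.swap)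
  also have "\<dots> = (\<Sum>c\<in>UNIV. t r c * (\<Sum>b\<in>UNIV. P c b * B b s))" by (simp add: NS)
  also have "\<dots> = (\<Sum>b\<in>UNIV. t r b * B b s) - tau r * PB s / Om"
    unfolding PBB tau_def by (simp add: NS)
  finally show ?thesis .
qed

lemma tP_eq: "tP r b = t r b - tau r * p b / Om"
  unfolding tP_def P_def tau_def by (simp add: NS)

lemma X1: "(\<Sum>b\<in>UNIV. \<Sum>k\<in>UNIV. t r b * p k * E b k) = - zeta r"
  unfolding zeta_def e_def E_def by (simp add: NS)

lemma X2: "(\<Sum>b\<in>UNIV. \<Sum>k\<in>UNIV. p b * t s k * E b k) = zeta s"
proof -
  have "(\<Sum>b\<in>UNIV. \<Sum>k\<in>UNIV. p b * t s k * E b k) = (\<Sum>k\<in>UNIV. \<Sum>b\<in>UNIV. p b * t s k * E b k)" by (rule sum.swap)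
  then show ?thesis unfolding zeta_def e_def by (simp add: NS)
qed

lemma X3: "(\<Sum>b\<in>UNIV. \<Sum>k\<in>UNIV. p b * p k * E b k) = 0"
proof -
  have "(\<Sum>b\<in>UNIV. \<Sum>k\<in>UNIV. p b * p k * E b k) = (\<Sum>k\<in>UNIV. \<Sum>b\<in>UNIV. p b * p k * E b k)" by (rule sum.swap)
  also have "\<dots> = (\<Sum>k\<in>UNIV. e k * p k)" unfolding e_def by (simp add: NS)
  finally show ?thesis by (simp add: ep0)
qed

lemma tPtPE: "(\<Sum>b\<in>UNIV. \<Sum>k\<in>UNIV. tP r b * tP s k * E b k) = (n5c r s - n5c s r) - (tau r * zeta s - tau s * zeta r) / Om"
proof -
  have "(\<Sum>b\<in>UNIV. \<Sum>k\<in>UNIV. tP r b * tP s k * E b k)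
     = (\<Sum>b\<in>UNIV. \<Sum>k\<in>UNIV. t r b * t s k * E b k) - (tau s / Om) * (\<Sum>b\<in>UNIV. \<Sum>k\<in>UNIV. t r b * p k * E b k)
       - (tau r / Om) * (\<Sum>b\<in>UNIV. \<Sum>k\<in>UNIV. p b * t s k * E b k) + (tau r / Om) * (tau s / Om) * (\<Sum>b\<in>UNIV. \<Sum>k\<in>UNIV. p b * p k * E b k)"
    unfolding tP_eq by (simp add: NS)
  then show ?thesis unfolding X1 X2 X3 M8[symmetric] by (simp add: algebra_simps diff_divide_distrib)
qed


lemma C_diff: "C2 r s - C2 s r = C r s - C s r + (\<Sum>b\<in>UNIV. tP r b * B b s) - (\<Sum>b\<in>UNIV. tP s b * B b r)
   + (\<Sum>b\<in>UNIV. \<Sum>k\<in>UNIV. tP r b * tP s k * E b k)"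
proof -
  have AC2: "C2 r s - C2 s r = nabU2 r s - nabU2 s r - (U2 r * PB2 s - U2 s * PB2 r) / Om - Rc2 r s"
    unfolding C2_def nabU2_def PB2_def Rc2_def by (rule AC_gen)
  have AC1: "C r s - C s r = nabU r s - nabU s r - (U r * PB s - U s * PB r) / Om - Rc r s"
    unfolding C_def nabU_def PB_def Rc_def by (rule AC_gen)
  show ?thesis
    apply (unfold AC2 AC1 N_eq[of r s] N_eq[of s r] R_eq rho_def M1 M2 M3 M4 M5 M6 M7 U2_def PB2_eq tPB tB hn_eq tPtPE sy_sym[of s r] M9)
    apply (unfold divide_inverse)
    by algebra
qed

end



lemma sum4_swap: "(\<Sum>a\<in>UNIV. \<Sum>b\<in>UNIV. \<Sum>c\<in>UNIV. \<Sum>d\<in>UNIV. f a b c d) = (\<Sum>c\<in>UNIV. \<Sum>d\<in>UNIV. \<Sum>a\<in>UNIV. \<Sum>b\<in>UNIV. f a b c d :: real)"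
  for f :: "'a::finite \<Rightarrow> 'b::finite \<Rightarrow> 'c::finite \<Rightarrow> 'd::finite \<Rightarrow> real"
proof -
  have "(\<Sum>a\<in>UNIV. \<Sum>b\<in>UNIV. \<Sum>c\<in>UNIV. \<Sum>d\<in>UNIV. f a b c d) = (\<Sum>a\<in>UNIV. \<Sum>c\<in>UNIV. \<Sum>b\<in>UNIV. \<Sum>d\<in>UNIV. f a b c d)"
    by (rule sum.cong[OF refl], rule sum.swap)
  also have "\<dots> = (\<Sum>c\<in>UNIV. \<Sum>a\<in>UNIV. \<Sum>b\<in>UNIV. \<Sum>d\<in>UNIV. f a b c d)" by (rule sum.swap)
  also have "\<dots> = (\<Sum>c\<in>UNIV. \<Sum>a\<in>UNIV. \<Sum>d\<in>UNIV. \<Sum>b\<in>UNIV. f a b c d)"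
    by (rule sum.cong[OF refl], rule sum.cong[OF refl], rule sum.swap)
  also have "\<dots> = (\<Sum>c\<in>UNIV. \<Sum>d\<in>UNIV. \<Sum>a\<in>UNIV. \<Sum>b\<in>UNIV. f a b c d)"
    by (rule sum.cong[OF refl], rule sum.swap)
  finally show ?thesis .
qed

lemma H1: "(\<Sum>x\<in>UNIV. f x * (c * g x)) = c * (\<Sum>x\<in>UNIV. f x * g x :: real)"
  by (simp add: sum_distrib_left mult_ac)

context alg begin

definition "Aeq \<longleftrightarrow> (\<forall>i j. (\<Sum>r\<in>UNIV. \<Sum>s\<in>UNIV. (A r s - A s r) * P i r * P j s) = 0)"
definition "Beq BB \<longleftrightarrow> (\<forall>i j. (\<Sum>r\<in>UNIV. \<Sum>s\<in>UNIV. P i r * BB r s * P s j)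
           = 1 / (real (card (UNIV :: 'n set)) - 1) * (\<Sum>r\<in>UNIV. \<Sum>s\<in>UNIV. BB r s * P s r) * P i j)"
definition "Ceq CC \<longleftrightarrow> (\<forall>i j. (\<Sum>r\<in>UNIV. \<Sum>s\<in>UNIV. (CC r s - CC s r) * P r i * P s j) = 0)"
definition "K r s = (\<Sum>m\<in>UNIV. \<Sum>b\<in>UNIV. E r m * P b m * t s b)"

lemma PK0:
  assumes Aeq
  shows "(\<Sum>r\<in>UNIV. P i r * K r s) = 0"
proof -
  have "(\<Sum>r\<in>UNIV. P i r * K r s) = (\<Sum>r\<in>UNIV. \<Sum>m\<in>UNIV. \<Sum>b\<in>UNIV. P i r * E r m * P b m * t s b)"
    unfolding K_def by (simp add: NS)
  also have "\<dots> = (\<Sum>m\<in>UNIV. \<Sum>b\<in>UNIV. \<Sum>r\<in>UNIV. P i r * E r m * P b m * t s b)" by (rule sum3_rot)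
  also have "\<dots> = (\<Sum>b\<in>UNIV. \<Sum>r\<in>UNIV. \<Sum>m\<in>UNIV. P i r * E r m * P b m * t s b)" by (rule sum3_rot)
  also have "\<dots> = (\<Sum>b\<in>UNIV. t s b * (\<Sum>r\<in>UNIV. \<Sum>m\<in>UNIV. (A r m - A m r) * P i r * P b m))"
    unfolding E_def by (simp add: NS)
  also have "\<dots> = 0" using assms unfolding Aeq_def by simp
  finally show ?thesis .
qed

lemma B_equiv:
  assumes Aeq
  shows "Beq B \<longleftrightarrow> Beq B2"
proof -
  have B2K: "B2 r s = B r s + K r s" for r s unfolding K_def by (rule B_diff)
  have 1: "(\<Sum>r\<in>UNIV. \<Sum>s\<in>UNIV. P i r * B2 r s * P s j) = (\<Sum>r\<in>UNIV. \<Sum>s\<in>UNIV. P i r * B r s * P s j)" for i j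
  proof -
    have "(\<Sum>r\<in>UNIV. \<Sum>s\<in>UNIV. P i r * K r s * P s j) = (\<Sum>s\<in>UNIV. \<Sum>r\<in>UNIV. P i r * K r s * P s j)" by (rule sum.swap)
    also have "\<dots> = (\<Sum>s\<in>UNIV. (\<Sum>r\<in>UNIV. P i r * K r s) * P s j)" by (simp add: sum_distrib_right)
    also have "\<dots> = 0" using PK0[OF assms] by simp
    finally have "(\<Sum>r\<in>UNIV. \<Sum>s\<in>UNIV. P i r * K r s * P s j) = 0" .
    then show ?thesis unfolding B2K by (simp add: NS)
  qed
  have 2: "(\<Sum>r\<in>UNIV. \<Sum>s\<in>UNIV. B2 r s * P s r) = (\<Sum>r\<in>UNIV. \<Sum>s\<in>UNIV. B r s * P s r)"
  proof -
    have "(\<Sum>r\<in>UNIV. \<Sum>s\<in>UNIV. K r s * P s r) = (\<Sum>s\<in>UNIV. \<Sum>r\<in>UNIV. P s r * K r s)" by (subst sum.swap) (simp add: mult_ac)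
    also have "\<dots> = 0" using PK0[OF assms] by simp
    finally have "(\<Sum>r\<in>UNIV. \<Sum>s\<in>UNIV. K r s * P s r) = 0" .
    then show ?thesis unfolding B2K by (simp add: NS)
  qed
  show ?thesis unfolding Beq_def 1 2 ..
qed


lemma tPtPE0:
  assumes Aeq
  shows "(\<Sum>b\<in>UNIV. \<Sum>k\<in>UNIV. tP r b * tP s k * E b k) = 0"
proof -
  have "(\<Sum>b\<in>UNIV. \<Sum>k\<in>UNIV. tP r b * tP s k * E b k) = (\<Sum>b\<in>UNIV. \<Sum>k\<in>UNIV. \<Sum>d\<in>UNIV. \<Sum>c\<in>UNIV. t r c * t s d * ((A b k - A k b) * P c b * P d k))"
    unfolding tP_def E_def by (simp add: NS)
  also have "\<dots> = (\<Sum>d\<in>UNIV. \<Sum>c\<in>UNIV. \<Sum>b\<in>UNIV. \<Sum>k\<in>UNIV. t r c * t s d * ((A b k - A k b) * P c b * P d k))"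
    by (rule sum4_swap)
  also have "\<dots> = (\<Sum>d\<in>UNIV. \<Sum>c\<in>UNIV. t r c * t s d * (\<Sum>b\<in>UNIV. \<Sum>k\<in>UNIV. (A b k - A k b) * P c b * P d k))"
    by (simp add: sum_distrib_left)
  also have "\<dots> = 0" using assms unfolding Aeq_def by simp
  finally show ?thesis .
qed

lemma tPB_proj:
  assumes "Beq B"
  shows "(\<Sum>s\<in>UNIV. (\<Sum>b\<in>UNIV. tP r b * B b s) * P s j)
     = 1 / (real (card (UNIV :: 'n set)) - 1) * (\<Sum>r\<in>UNIV. \<Sum>s\<in>UNIV. B r s * P s r) * (\<Sum>c\<in>UNIV. t r c * P c j)"
proof -
  let ?l = "1 / (real (card (UNIV :: 'n set)) - 1) * (\<Sum>r\<in>UNIV. \<Sum>s\<in>UNIV. B r s * P s r)"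
  have "(\<Sum>s\<in>UNIV. (\<Sum>b\<in>UNIV. tP r b * B b s) * P s j) = (\<Sum>s\<in>UNIV. \<Sum>b\<in>UNIV. \<Sum>c\<in>UNIV. t r c * (P c b * B b s * P s j))"
    unfolding tP_def by (simp add: NS)
  also have "\<dots> = (\<Sum>c\<in>UNIV. \<Sum>b\<in>UNIV. \<Sum>s\<in>UNIV. t r c * (P c b * B b s * P s j))" by (rule sum3_rev)
  also have "\<dots> = (\<Sum>c\<in>UNIV. t r c * (\<Sum>b\<in>UNIV. \<Sum>s\<in>UNIV. P c b * B b s * P s j))"
    by (simp add: sum_distrib_left mult.assoc)
  also have "\<dots> = (\<Sum>c\<in>UNIV. t r c * (?l * P c j))"
    using assms unfolding Beq_def by simp
  also have "\<dots> = ?l * (\<Sum>c\<in>UNIV. t r c * P c j)" by (rule H1)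
  finally show ?thesis .
qed

lemma C_equiv:
  assumes Aeq "Beq B"
  shows "Ceq C \<longleftrightarrow> Ceq C2"
proof -
  let ?l = "1 / (real (card (UNIV :: 'n set)) - 1) * (\<Sum>r\<in>UNIV. \<Sum>s\<in>UNIV. B r s * P s r)"
  have main: "(\<Sum>r\<in>UNIV. \<Sum>s\<in>UNIV. (C2 r s - C2 s r) * P r i * P s j) = (\<Sum>r\<in>UNIV. \<Sum>s\<in>UNIV. (C r s - C s r) * P r i * P s j)" for i j
  proof -
    have d: "C2 r s - C2 s r = (C r s - C s r) + (\<Sum>b\<in>UNIV. tP r b * B b s) - (\<Sum>b\<in>UNIV. tP s b * B b r)" for r s
      using C_diff[of r s] tPtPE0[OF assms(1), of r s] by simp
    have t1: "(\<Sum>r\<in>UNIV. \<Sum>s\<in>UNIV. (\<Sum>b\<in>UNIV. tP r b * B b s) * P r i * P s j) = ?l * (\<Sum>r\<in>UNIV. \<Sum>c\<in>UNIV. P r i * t r c * P c j)"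
    proof -
      have "(\<Sum>r\<in>UNIV. \<Sum>s\<in>UNIV. (\<Sum>b\<in>UNIV. tP r b * B b s) * P r i * P s j) = (\<Sum>r\<in>UNIV. P r i * (\<Sum>s\<in>UNIV. (\<Sum>b\<in>UNIV. tP r b * B b s) * P s j))"
        by (simp add: sum_distrib_left mult_ac)
      also have "\<dots> = (\<Sum>r\<in>UNIV. P r i * (?l * (\<Sum>c\<in>UNIV. t r c * P c j)))"
        using tPB_proj[OF assms(2)] by simp
      also have "\<dots> = ?l * (\<Sum>r\<in>UNIV. P r i * (\<Sum>c\<in>UNIV. t r c * P c j))"
        by (rule H1)
      also have "\<dots> = ?l * (\<Sum>r\<in>UNIV. \<Sum>c\<in>UNIV. P r i * t r c * P c j)"
        by (simp add: sum_distrib_left mult.assoc)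
      finally show ?thesis .
    qed
    have t2: "(\<Sum>r\<in>UNIV. \<Sum>s\<in>UNIV. (\<Sum>b\<in>UNIV. tP s b * B b r) * P r i * P s j) = ?l * (\<Sum>s\<in>UNIV. \<Sum>c\<in>UNIV. P s j * t s c * P c i)"
    proof -
      have "(\<Sum>r\<in>UNIV. \<Sum>s\<in>UNIV. (\<Sum>b\<in>UNIV. tP s b * B b r) * P r i * P s j) = (\<Sum>s\<in>UNIV. \<Sum>r\<in>UNIV. (\<Sum>b\<in>UNIV. tP s b * B b r) * P r i * P s j)"
        by (rule sum.swap)
      also have "\<dots> = (\<Sum>s\<in>UNIV. P s j * (\<Sum>r\<in>UNIV. (\<Sum>b\<in>UNIV. tP s b * B b r) * P r i))"
        by (simp add: sum_distrib_left mult_ac)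
      also have "\<dots> = (\<Sum>s\<in>UNIV. P s j * (?l * (\<Sum>c\<in>UNIV. t s c * P c i)))"
        using tPB_proj[OF assms(2)] by simp
      also have "\<dots> = ?l * (\<Sum>s\<in>UNIV. P s j * (\<Sum>c\<in>UNIV. t s c * P c i))"
        by (rule H1)
      also have "\<dots> = ?l * (\<Sum>s\<in>UNIV. \<Sum>c\<in>UNIV. P s j * t s c * P c i)"
        by (simp add: sum_distrib_left mult.assoc)
      finally show ?thesis .
    qed
    have sym: "(\<Sum>r\<in>UNIV. \<Sum>c\<in>UNIV. P r i * t r c * P c j) = (\<Sum>s\<in>UNIV. \<Sum>c\<in>UNIV. P s j * t s c * P c i)"
    proof -
      have "(\<Sum>r\<in>UNIV. \<Sum>c\<in>UNIV. P r i * t r c * P c j) = (\<Sum>c\<in>UNIV. \<Sum>r\<in>UNIV. P r i * t r c * P c j)" by (rule sum.swap)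
      then show ?thesis by (simp add: t_sym mult_ac)
    qed
    have "(\<Sum>r\<in>UNIV. \<Sum>s\<in>UNIV. (C2 r s - C2 s r) * P r i * P s j)
       = (\<Sum>r\<in>UNIV. \<Sum>s\<in>UNIV. (C r s - C s r) * P r i * P s j)
         + (\<Sum>r\<in>UNIV. \<Sum>s\<in>UNIV. (\<Sum>b\<in>UNIV. tP r b * B b s) * P r i * P s j)
         - (\<Sum>r\<in>UNIV. \<Sum>s\<in>UNIV. (\<Sum>b\<in>UNIV. tP s b * B b r) * P r i * P s j)"
      unfolding d by (simp add: algebra_simps sum.distrib sum_subtractf)
    then show ?thesis unfolding t1 t2 sym by simp
  qed
  show ?thesis unfolding Ceq_def main ..
qed

end



lemma fd_add:
  assumes "f differentiable at z" "g differentiable at z"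
  shows "frechet_derivative (\<lambda>z. f z + g z) (at z) v = frechet_derivative f (at z) v + frechet_derivative g (at z) v"
proof -
  have h: "((\<lambda>z. f z + g z) has_derivative (\<lambda>v. frechet_derivative f (at z) v + frechet_derivative g (at z) v)) (at z)"
    using assms by (intro has_derivative_add) (simp_all add: frechet_derivative_works[symmetric])
  show ?thesis using fun_cong[OF frechet_derivative_at[OF h], of v] by simp
qed

lemma fd_diff:
  assumes "f differentiable at z" "g differentiable at z"
  shows "frechet_derivative (\<lambda>z. f z - g z) (at z) v = frechet_derivative f (at z) v - frechet_derivative g (at z) v"
proof -
  have h: "((\<lambda>z. f z - g z) has_derivative (\<lambda>v. frechet_derivative f (at z) v - frechet_derivative g (at z) v)) (at z)"
    using assms by (intro has_derivative_diff) (simp_all add: frechet_derivative_works[symmetric])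
  show ?thesis using fun_cong[OF frechet_derivative_at[OF h], of v] by simp
qed

lemma fd_mult:
  fixes f g :: "'a::real_normed_vector \<Rightarrow> real"
  assumes "f differentiable at z" "g differentiable at z"
  shows "frechet_derivative (\<lambda>z. f z * g z) (at z) v = f z * frechet_derivative g (at z) v + frechet_derivative f (at z) v * g z"
proof -
  have h: "((\<lambda>z. f z * g z) has_derivative (\<lambda>v. f z * frechet_derivative g (at z) v + frechet_derivative f (at z) v * g z)) (at z)"
    using assms by (intro has_derivative_mult) (simp_all add: frechet_derivative_works[symmetric])
  show ?thesis using fun_cong[OF frechet_derivative_at[OF h], of v] by simp
qed

lemma fd_sum:
  fixes f :: "'i \<Rightarrow> 'a::real_normed_vector \<Rightarrow> real"
  assumes "finite S" "\<And>i. i \<in> S \<Longrightarrow> f i differentiable at z"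
  shows "frechet_derivative (\<lambda>z. \<Sum>i\<in>S. f i z) (at z) v = (\<Sum>i\<in>S. frechet_derivative (f i) (at z) v)"
proof -
  have h: "((\<lambda>z. \<Sum>i\<in>S. f i z) has_derivative (\<lambda>v. \<Sum>i\<in>S. frechet_derivative (f i) (at z) v)) (at z)"
    using assms by (intro has_derivative_sum) (simp_all add: frechet_derivative_works[symmetric])
  show ?thesis using fun_cong[OF frechet_derivative_at[OF h], of v] by simp
qed

lemma coord_hd: "((\<lambda>z::(real^'n) \<times> (real^'n). snd z $ c) has_derivative (\<lambda>h. snd h $ c)) F"
  by (rule bounded_linear.has_derivative[OF bounded_linear_vec_nth has_derivative_snd[OF has_derivative_ident]])

lemma coord_diff: "(\<lambda>z::(real^'n) \<times> (real^'n). snd z $ c) differentiable F"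
  using coord_hd unfolding differentiable_def by blast

lemma fd_coord: "frechet_derivative (\<lambda>z::(real^'n) \<times> (real^'n). snd z $ c) (at z) v = snd v $ c"
  using fun_cong[OF frechet_derivative_at[OF coord_hd], of v] by simp

lemma smooth_d0:
  assumes "smooth_ext U f" "x \<in> U"
  shows "(\<lambda>z. f (fst z) (snd z)) differentiable at (x, p)"
proof -
  have "iter_dd [] (\<lambda>z. f (fst z) (snd z)) differentiable at (x, p)"
    using assms unfolding smooth_ext_def smooth_on_def by blast
  then show ?thesis by simp
qed

lemma smooth_d1:
  assumes "smooth_ext U f" "x \<in> U"
  shows "(\<lambda>z. frechet_derivative (\<lambda>z. f (fst z) (snd z)) (at z) v) differentiable at (x, p)"
proof -
  have "iter_dd [v] (\<lambda>z. f (fst z) (snd z)) differentiable at (x, p)"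
    using assms unfolding smooth_ext_def smooth_on_def by blast
  then show ?thesis by simp
qed

lemma smooth_dx:
  assumes "smooth_ext U f" "x \<in> U"
  shows "(\<lambda>z. dx m f (fst z) (snd z)) differentiable at (x, p)"
  using smooth_d1[OF assms, of "(axis m 1, 0)" p] unfolding dx_def by simp

lemma smooth_dp:
  assumes "smooth_ext U f" "x \<in> U"
  shows "(\<lambda>z. dp m f (fst z) (snd z)) differentiable at (x, p)"
  using smooth_d1[OF assms, of "(0, axis m 1)" p] unfolding dp_def by simp


lemma Wf_diff:
  assumes "\<And>i. smooth_ext U (V i)" "x \<in> U"
  shows "(\<lambda>z. Wf V b (fst z) (snd z)) differentiable at (x, p)"
  unfolding Wf_def using smooth_dp[OF assms(1) assms(2)]
  by (intro differentiable_sum differentiable_mult ballI coord_diff) auto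

lemma Uf_diff:
  assumes "\<And>i. smooth_ext U (V i)" "\<And>k i j. smooth_ext U (G k i j)" "\<And>i. smooth_ext U (Q i)" "x \<in> U"
  shows "(\<lambda>z. Uf G V Q s (fst z) (snd z)) differentiable at (x, p)"
  unfolding Uf_def nab_up_def hor_def
  using smooth_dp[OF assms(1) assms(4)] smooth_dx[OF assms(1) assms(4)] smooth_d0[OF assms(1) assms(4)]
    smooth_d0[OF assms(2) assms(4)] smooth_d0[OF assms(3) assms(4)]
  by (intro differentiable_sum differentiable_mult differentiable_add ballI coord_diff) auto

lemma dp_add:
  assumes "smooth_ext U f" "smooth_ext U g" "x \<in> U"
  shows "dp r (\<lambda>x p. f x p + g x p) x p = dp r f x p + dp r g x p"
  unfolding dp_def using smooth_d0[OF assms(1,3)] smooth_d0[OF assms(2,3)] by (simp add: fd_add)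

lemma dx_add:
  assumes "smooth_ext U f" "smooth_ext U g" "x \<in> U"
  shows "dx r (\<lambda>x p. f x p + g x p) x p = dx r f x p + dx r g x p"
  unfolding dx_def using smooth_d0[OF assms(1,3)] smooth_d0[OF assms(2,3)] by (simp add: fd_add)

lemma UU':
  "Uf (\<lambda>k i j x p. G k i j x p + T k i j x p) V
      (\<lambda>i x p. Q i x p - (\<Sum>k\<in>UNIV. \<Sum>s\<in>UNIV. T k i s x p * p$k * V s x p)) s x p
   = Uf G V Q s x p + (\<Sum>b\<in>UNIV. \<Sum>c\<in>UNIV. p$c * T c s b x p * Wf V b x p)"
proof -
  have 1: "(\<Sum>r\<in>UNIV. (\<Sum>b\<in>UNIV. \<Sum>c\<in>UNIV. p$c * T c s b x p * dp b (V r) x p) * p$r)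
     = (\<Sum>r\<in>UNIV. \<Sum>b\<in>UNIV. \<Sum>c\<in>UNIV. p$c * T c s b x p * dp b (V r) x p * p$r)"
    by (simp add: sum_distrib_right)
  also have "\<dots> = (\<Sum>b\<in>UNIV. \<Sum>c\<in>UNIV. \<Sum>r\<in>UNIV. p$c * T c s b x p * dp b (V r) x p * p$r)"
    by (rule sum3_rot)
  also have "\<dots> = (\<Sum>b\<in>UNIV. \<Sum>c\<in>UNIV. p$c * T c s b x p * Wf V b x p)"
    unfolding Wf_def by (simp add: sum_distrib_left mult_ac)
  finally have 1: "(\<Sum>r\<in>UNIV. (\<Sum>b\<in>UNIV. \<Sum>c\<in>UNIV. p$c * T c s b x p * dp b (V r) x p) * p$r)
     = (\<Sum>b\<in>UNIV. \<Sum>c\<in>UNIV. p$c * T c s b x p * Wf V b x p)" .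
  have 2: "(\<Sum>r\<in>UNIV. (\<Sum>a\<in>UNIV. T r s a x p * V a x p) * p$r) = (\<Sum>k\<in>UNIV. \<Sum>s'\<in>UNIV. T k s s' x p * p$k * V s' x p)"
    by (simp add: sum_distrib_right sum_distrib_left mult_ac)
  show ?thesis
    unfolding Uf_def nab_up_def hor_def
    using 1 2 by (simp add: algebra_simps sum.distrib)
qed


lemma tau_fun: "(\<lambda>z. Uf (\<lambda>k i j x p. G k i j x p + T k i j x p) V
      (\<lambda>i x p. Q i x p - (\<Sum>k\<in>UNIV. \<Sum>s\<in>UNIV. T k i s x p * p$k * V s x p)) s (fst z) (snd z))
   = (\<lambda>z. Uf G V Q s (fst z) (snd z) + (\<Sum>b\<in>UNIV. \<Sum>c\<in>UNIV. snd z $ c * T c s b (fst z) (snd z) * Wf V b (fst z) (snd z)))"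
  by (rule ext) (simp add: UU')

lemma dU':
  assumes V: "\<And>i. smooth_ext U (V i)" and G: "\<And>k i j. smooth_ext U (G k i j)" and Q: "\<And>i. smooth_ext U (Q i)"
    and T: "\<And>k i j. smooth_ext U (T k i j)" and x: "x \<in> U"
  shows "dp r (Uf (\<lambda>k i j x p. G k i j x p + T k i j x p) V
      (\<lambda>i x p. Q i x p - (\<Sum>k\<in>UNIV. \<Sum>s\<in>UNIV. T k i s x p * p$k * V s x p)) s) x p
   = dp r (Uf G V Q s) x p + (\<Sum>b\<in>UNIV. \<Sum>c\<in>UNIV. ((if c = r then 1 else 0) * T c s b x p + p$c * dp r (T c s b) x p) * Wf V b x p
        + p$c * T c s b x p * dp r (Wf V b) x p)"
  unfolding dp_def tau_fun
  using Uf_diff[OF V G Q x] Wf_diff[OF V x] smooth_d0[OF T x]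
  by (simp add: fd_add fd_sum fd_mult fd_coord coord_diff axis_def algebra_simps sum.distrib)

lemma dxU':
  assumes V: "\<And>i. smooth_ext U (V i)" and G: "\<And>k i j. smooth_ext U (G k i j)" and Q: "\<And>i. smooth_ext U (Q i)"
    and T: "\<And>k i j. smooth_ext U (T k i j)" and x: "x \<in> U"
  shows "dx r (Uf (\<lambda>k i j x p. G k i j x p + T k i j x p) V
      (\<lambda>i x p. Q i x p - (\<Sum>k\<in>UNIV. \<Sum>s\<in>UNIV. T k i s x p * p$k * V s x p)) s) x p
   = dx r (Uf G V Q s) x p + (\<Sum>b\<in>UNIV. \<Sum>c\<in>UNIV. p$c * dx r (T c s b) x p * Wf V b x p
        + p$c * T c s b x p * dx r (Wf V b) x p)"
  unfolding dx_def tau_fun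
  using Uf_diff[OF V G Q x] Wf_diff[OF V x] smooth_d0[OF T x]
  by (simp add: fd_add fd_sum fd_mult fd_coord coord_diff axis_def algebra_simps sum.distrib)

theorem theorem13p2:
  fixes U :: "(real^'n::finite) set"
    and G T :: "'n conn"
    and V Q :: "'n \<Rightarrow> 'n scal"
  assumes "open U"
    and "CARD('n) \<ge> 2"
    and "\<And>k i j. smooth_ext U (G k i j)"
    and "\<And>k i j. G k i j = G k j i"
    and "\<And>i. smooth_ext U (V i)"
    and "regular_field U V"
    and "\<And>i. smooth_ext U (Q i)"
    and "\<And>k i j. smooth_ext U (T k i j)"
    and "\<And>k i j. T k i j = T k j i"
  shows "(\<forall>x\<in>U. \<forall>p. p \<noteq> 0 \<longrightarrow> normality_eqs G V Q x p)
     \<longleftrightarrow> (\<forall>x\<in>U. \<forall>p. p \<noteq> 0 \<longrightarrow>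
            normality_eqs (\<lambda>k i j x p. G k i j x p + T k i j x p) V
              (\<lambda>i x p. Q i x p - (\<Sum>k\<in>UNIV. \<Sum>s\<in>UNIV. T k i s x p * p$k * V s x p)) x p)"
proof -
  have pt: "normality_eqs G V Q x p \<longleftrightarrow> normality_eqs (\<lambda>k i j x p. G k i j x p + T k i j x p) V
              (\<lambda>i x p. Q i x p - (\<Sum>k\<in>UNIV. \<Sum>s\<in>UNIV. T k i s x p * p$k * V s x p)) x p"
    if x: "x \<in> U" for x p
  proof -
    interpret a: alg "\<lambda>c. p$c" "\<lambda>b. Wf V b x p" "\<lambda>s. Uf G V Q s x p" "\<lambda>r b. dp r (Wf V b) x p"
      "\<lambda>b r. dx r (Wf V b) x p" "\<lambda>s r. dx r (Uf G V Q s) x p" "\<lambda>s r. dp r (Uf G V Q s) x p"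
      "\<lambda>c a b. G c a b x p" "\<lambda>c a b. T c a b x p" "\<lambda>c a b r. dx r (G c a b) x p" "\<lambda>c a b r. dp r (G c a b) x p"
      "\<lambda>c a b r. dx r (T c a b) x p" "\<lambda>c a b r. dp r (T c a b) x p" "Omega V x p"
      by unfold_locales (simp_all add: assms(4) assms(9))
    have eP: "Pf V i j x p = a.P i j" for i j by (simp add: Pf_def a.P_def)
    have eA: "Af V r s x p = dp r (Wf V s) x p" for r s by (simp add: Af_def)
    have eB: "Bf G V Q r s x p = a.B r s" for r s
      unfolding Bf_def a.B_def Bg_def hnab_def nab_up_def hor_def Dt_def by simp
    have eC: "Cf G V Q r s x p = a.C r s" for r s
      unfolding Cf_def a.C_def Cg_def nabUg_def nab_down_def hor_def hnab_def nab_up_def curv_def curvg_def Dt_def by simp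
    have g2: "G c a b x p + T c a b x p = a.g2 c a b" for c a b by (simp add: a.g2_def)
    have gx2: "dx r (\<lambda>x p. G c a b x p + T c a b x p) x p = a.gx2 c a b r" for c a b r
      by (simp add: a.gx2_def dx_add[OF assms(3) assms(8) x])
    have gp2: "dp r (\<lambda>x p. G c a b x p + T c a b x p) x p = a.gp2 c a b r" for c a b r
      by (simp add: a.gp2_def dp_add[OF assms(3) assms(8) x])
    have U2: "Uf (\<lambda>k i j x p. G k i j x p + T k i j x p) V
      (\<lambda>i x p. Q i x p - (\<Sum>k\<in>UNIV. \<Sum>s\<in>UNIV. T k i s x p * p$k * V s x p)) s x p = a.U2 s" for s
      unfolding UU' a.U2_def a.tau_def a.t_def by (simp add: NS)
    have Up2: "dp r (Uf (\<lambda>k i j x p. G k i j x p + T k i j x p) V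
      (\<lambda>i x p. Q i x p - (\<Sum>k\<in>UNIV. \<Sum>s\<in>UNIV. T k i s x p * p$k * V s x p)) s) x p = a.Up2 s r" for s r
      unfolding dU'[OF assms(5) assms(3) assms(7) assms(8) x] a.Up2_def by simp
    have Ux2: "dx r (Uf (\<lambda>k i j x p. G k i j x p + T k i j x p) V
      (\<lambda>i x p. Q i x p - (\<Sum>k\<in>UNIV. \<Sum>s\<in>UNIV. T k i s x p * p$k * V s x p)) s) x p = a.Ux2 s r" for s r
      unfolding dxU'[OF assms(5) assms(3) assms(7) assms(8) x] a.Ux2_def by simp
    have eB2: "Bf (\<lambda>k i j x p. G k i j x p + T k i j x p) V
      (\<lambda>i x p. Q i x p - (\<Sum>k\<in>UNIV. \<Sum>s\<in>UNIV. T k i s x p * p$k * V s x p)) r s x p = a.B2 r s" for r s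
      unfolding Bf_def a.B2_def Bg_def hnab_def nab_up_def hor_def Dt_def by (simp add: g2 gp2 U2 Up2)
    have eC2: "Cf (\<lambda>k i j x p. G k i j x p + T k i j x p) V
      (\<lambda>i x p. Q i x p - (\<Sum>k\<in>UNIV. \<Sum>s\<in>UNIV. T k i s x p * p$k * V s x p)) r s x p = a.C2 r s" for r s
      unfolding Cf_def a.C2_def Cg_def nabUg_def nab_down_def hor_def hnab_def nab_up_def curv_def curvg_def Dt_def
      by (simp add: g2 gp2 gx2 U2 Up2 Ux2)
    have N1: "normality_eqs G V Q x p \<longleftrightarrow> a.Aeq \<and> a.Ceq a.C \<and> a.Beq a.B"
      unfolding normality_eqs_def a.Aeq_def a.Ceq_def a.Beq_def eP eA eB eC by simp
    have N2: "normality_eqs (\<lambda>k i j x p. G k i j x p + T k i j x p) V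
              (\<lambda>i x p. Q i x p - (\<Sum>k\<in>UNIV. \<Sum>s\<in>UNIV. T k i s x p * p$k * V s x p)) x p
        \<longleftrightarrow> a.Aeq \<and> a.Ceq a.C2 \<and> a.Beq a.B2"
      unfolding normality_eqs_def a.Aeq_def a.Ceq_def a.Beq_def eP eA eB2 eC2 by simp
    show ?thesis unfolding N1 N2 using a.B_equiv a.C_equiv by blast
  qed
  show ?thesis using pt by blast
qed


end
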